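(* The generating function $$G_{(213,231)}(x,p,q,y,z)=\sum_{n\ge 0}\ \sum_{\pi\in S_n(213,231)} x^n p^{\operatorname{asc}(\pi)} q^{\operatorname{des}(\pi)} y^{\operatorname{MNA}(\pi)} z^{\operatorname{MND}(\pi)}$$ is equal to $$\frac{1 + x + p x^2 y - p^2 x^2 y + q x^2 z - q^2 x^2 z - p q x^2 y z + p q x^3 y z - p^2 q x^3 y z - p q^2 x^3 y z}{1 - p^2 x^2 y - q^2 x^2 z - p q x^2 y z - p^2 q x^3 y z - p q^2 x^3 y z}.$$
   Context: For $n\ge 0$, $S_n$ denotes the set of permutations $\pi=\pi_1\pi_2\cdots\pi_n$ of $[n]=\{1,\dots,n\}$ ($S_0$ consists of the empty permutation, for which all statistics below are $0$). A permutation $\pi\in S_n$ avoids a pattern $\tau\in S_k$ if there are no indices $i_1<\dots<i_k$ such that $\pi_{i_a}<\pi_{i_b}$ if and only if $\tau_a<\tau_b$; $S_n(\tau,\rho)$ is the set of permutations in $S_n$ avoiding both $\tau$ and $\rho$. $\operatorname{asc}(\pi)$ (resp. $\operatorname{des}(\pi)$) is the number of $i\in[n-1]$ with $\pi_i<\pi_{i+1}$ (resp. $\pi_i>\pi_{i+1}$). $\operatorname{MNA}(\pi)$ is the maximum size of a set $I\subseteq[n-1]$ such that $\pi_i<\pi_{i+1}$ for all $i\in I$ and $|i-j|\ge 2$ for distinct $i,j\in I$; $\operatorname{MND}(\pi)$ is defined analogously with $\pi_i>\pi_{i+1}$. *)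

theory Defs
  imports "HOL-Combinatorics.Multiset_Permutations" "HOL-Computational_Algebra.Formal_Power_Series"
begin

text \<open>Permutations of [n] are represented as lists (one-line notation); positions are 0-indexed.\<close>

definition contains_pattern :: "nat list \<Rightarrow> nat list \<Rightarrow> bool" where
  "contains_pattern \<pi> \<tau> \<longleftrightarrow>
     (\<exists>is. length is = length \<tau> \<and> sorted_wrt (<) is \<and> (\<forall>i\<in>set is. i < length \<pi>) \<and>
        (\<forall>a<length \<tau>. \<forall>b<length \<tau>. (\<pi> ! (is ! a) < \<pi> ! (is ! b)) \<longleftrightarrow> (\<tau> ! a < \<tau> ! b)))"

definition avoids :: "nat list \<Rightarrow> nat list \<Rightarrow> bool" where
  "avoids \<pi> \<tau> \<longleftrightarrow> \<not> contains_pattern \<pi> \<tau>"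

definition Av2 :: "nat \<Rightarrow> nat list \<Rightarrow> nat list \<Rightarrow> nat list set" where
  "Av2 n \<tau> \<rho> = {\<pi> \<in> permutations_of_set {1..n}. avoids \<pi> \<tau> \<and> avoids \<pi> \<rho>}"

definition ascset :: "nat list \<Rightarrow> nat set" where
  "ascset \<pi> = {i. Suc i < length \<pi> \<and> \<pi> ! i < \<pi> ! Suc i}"

definition desset :: "nat list \<Rightarrow> nat set" where
  "desset \<pi> = {i. Suc i < length \<pi> \<and> \<pi> ! i > \<pi> ! Suc i}"

definition asc :: "nat list \<Rightarrow> nat" where "asc \<pi> = card (ascset \<pi>)"
definition des :: "nat list \<Rightarrow> nat" where "des \<pi> = card (desset \<pi>)"

definition max_nonadj :: "nat set \<Rightarrow> nat" where
  "max_nonadj S = Max {card I | I. I \<subseteq> S \<and> (\<forall>i\<in>I. \<forall>j\<in>I. i \<noteq> j \<longrightarrow> i + 2 \<le> j \<or> j + 2 \<le> i)}"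

definition MNA :: "nat list \<Rightarrow> nat" where "MNA \<pi> = max_nonadj (ascset \<pi>)"
definition MND :: "nat list \<Rightarrow> nat" where "MND \<pi> = max_nonadj (desset \<pi>)"

end

theory Submission imports Defs begin

lemma contains_213:
  "contains_pattern \<pi> [2,1,3] \<longleftrightarrow>
   (\<exists>i j k. i < j \<and> j < k \<and> k < length \<pi> \<and> \<pi>!j < \<pi>!i \<and> \<pi>!i < \<pi>!k)"
proof
  assume "contains_pattern \<pi> [2,1,3]"
  then obtain "is" where L0: "length is = length [2,1,3::nat]" and S: "sorted_wrt (<) is"
    and B: "\<forall>i\<in>set is. i < length \<pi>"
    and C: "\<forall>a<length [2,1,3::nat]. \<forall>b<length [2,1,3::nat]. (\<pi> ! (is ! a) < \<pi> ! (is ! b)) \<longleftrightarrow> ([2,1,3::nat] ! a < [2,1,3] ! b)"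
    unfolding contains_pattern_def by blast
  have L: "length is = 3" using L0 by simp
  from L obtain i j k where I: "is = [i,j,k]"
    by (auto simp: numeral_3_eq_3 length_Suc_conv)
  have "\<pi>!j < \<pi>!i" using C[rule_format, of 1 0] I by simp
  moreover have "\<pi>!i < \<pi>!k" using C[rule_format, of 0 2] I by simp
  ultimately show "\<exists>i j k. i < j \<and> j < k \<and> k < length \<pi> \<and> \<pi>!j < \<pi>!i \<and> \<pi>!i < \<pi>!k"
    using S B I by auto
next
  assume "\<exists>i j k. i < j \<and> j < k \<and> k < length \<pi> \<and> \<pi>!j < \<pi>!i \<and> \<pi>!i < \<pi>!k"
  then obtain i j k where H: "i < j" "j < k" "k < length \<pi>" "\<pi>!j < \<pi>!i" "\<pi>!i < \<pi>!k" by blast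
  show "contains_pattern \<pi> [2,1,3]"
    unfolding contains_pattern_def
    apply (rule exI[of _ "[i,j,k]"])
    using H by (simp add: All_less_Suc numeral_3_eq_3)
qed

lemma contains_231:
  "contains_pattern \<pi> [2,3,1] \<longleftrightarrow>
   (\<exists>i j k. i < j \<and> j < k \<and> k < length \<pi> \<and> \<pi>!k < \<pi>!i \<and> \<pi>!i < \<pi>!j)"
proof
  assume "contains_pattern \<pi> [2,3,1]"
  then obtain "is" where L0: "length is = length [2,3,1::nat]" and S: "sorted_wrt (<) is"
    and B: "\<forall>i\<in>set is. i < length \<pi>"
    and C: "\<forall>a<length [2,3,1::nat]. \<forall>b<length [2,3,1::nat]. (\<pi> ! (is ! a) < \<pi> ! (is ! b)) \<longleftrightarrow> ([2,3,1::nat] ! a < [2,3,1] ! b)"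
    unfolding contains_pattern_def by blast
  have L: "length is = 3" using L0 by simp
  from L obtain i j k where I: "is = [i,j,k]"
    by (auto simp: numeral_3_eq_3 length_Suc_conv)
  have "\<pi>!k < \<pi>!i" using C[rule_format, of 2 0] I by simp
  moreover have "\<pi>!i < \<pi>!j" using C[rule_format, of 0 1] I by simp
  ultimately show "\<exists>i j k. i < j \<and> j < k \<and> k < length \<pi> \<and> \<pi>!k < \<pi>!i \<and> \<pi>!i < \<pi>!j"
    using S B I by auto
next
  assume "\<exists>i j k. i < j \<and> j < k \<and> k < length \<pi> \<and> \<pi>!k < \<pi>!i \<and> \<pi>!i < \<pi>!j"
  then obtain i j k where H: "i < j" "j < k" "k < length \<pi>" "\<pi>!k < \<pi>!i" "\<pi>!i < \<pi>!j" by blast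
  show "contains_pattern \<pi> [2,3,1]"
    unfolding contains_pattern_def
    apply (rule exI[of _ "[i,j,k]"])
    using H by (simp add: All_less_Suc numeral_3_eq_3)
qed

fun mm :: "nat list \<Rightarrow> bool" where
  "mm [] = True"
| "mm (a#l) = (mm l \<and> ((\<forall>x\<in>set l. a \<le> x) \<or> (\<forall>x\<in>set l. x \<le> a)))"

definition RR :: "nat list \<Rightarrow> bool" where
  "RR \<pi> = (\<exists>i j k. i < j \<and> i < k \<and> j < length \<pi> \<and> k < length \<pi> \<and> \<pi>!j < \<pi>!i \<and> \<pi>!i < \<pi>!k)"

lemma RR_Cons: "RR (a#l) \<longleftrightarrow> RR l \<or> ((\<exists>x\<in>set l. x < a) \<and> (\<exists>x\<in>set l. a < x))"
proof
  assume "RR (a#l)"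
  then obtain i j k where H: "i < j" "i < k" "j < Suc (length l)" "k < Suc (length l)"
     "(a#l)!j < (a#l)!i" "(a#l)!i < (a#l)!k" unfolding RR_def by auto
  obtain j' k' where J: "j = Suc j'" "k = Suc k'" using H by (metis lessE)
  show "RR l \<or> ((\<exists>x\<in>set l. x < a) \<and> (\<exists>x\<in>set l. a < x))"
  proof (cases i)
    case 0
    then show ?thesis using H J by auto
  next
    case (Suc i')
    then have "RR l" unfolding RR_def using H J
      by (intro exI[of _ i'] exI[of _ j'] exI[of _ k']) auto
    then show ?thesis by simp
  qed
next
  assume "RR l \<or> ((\<exists>x\<in>set l. x < a) \<and> (\<exists>x\<in>set l. a < x))"
  then show "RR (a#l)"
  proof
    assume "RR l"
    then obtain i j k where H: "i < j" "i < k" "j < length l" "k < length l"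
     "l!j < l!i" "l!i < l!k" unfolding RR_def by auto
    show ?thesis unfolding RR_def using H
      by (intro exI[of _ "Suc i"] exI[of _ "Suc j"] exI[of _ "Suc k"]) auto
  next
    assume "(\<exists>x\<in>set l. x < a) \<and> (\<exists>x\<in>set l. a < x)"
    then obtain j k where H: "j < length l" "k < length l" "l!j < a" "a < l!k"
      by (metis in_set_conv_nth)
    show ?thesis unfolding RR_def using H
      by (intro exI[of _ "0"] exI[of _ "Suc j"] exI[of _ "Suc k"]) auto
  qed
qed

lemma mm_RR: "mm \<pi> \<longleftrightarrow> \<not> RR \<pi>"
proof (induction \<pi>)
  case Nil
  then show ?case by (simp add: RR_def)
next
  case (Cons a l)
  then show ?case using RR_Cons[of a l] by (auto simp: not_le)
qed

lemma avoids_mm: "avoids \<pi> [2,1,3] \<and> avoids \<pi> [2,3,1] \<longleftrightarrow> mm \<pi>"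
proof -
  have "(contains_pattern \<pi> [2,1,3] \<or> contains_pattern \<pi> [2,3,1]) \<longleftrightarrow> RR \<pi>"
    unfolding contains_213 contains_231 RR_def
  proof
    assume "(\<exists>i j k. i < j \<and> j < k \<and> k < length \<pi> \<and> \<pi> ! j < \<pi> ! i \<and> \<pi> ! i < \<pi> ! k) \<or>
      (\<exists>i j k. i < j \<and> j < k \<and> k < length \<pi> \<and> \<pi> ! k < \<pi> ! i \<and> \<pi> ! i < \<pi> ! j)"
    then show "\<exists>i j k. i < j \<and> i < k \<and> j < length \<pi> \<and> k < length \<pi> \<and> \<pi> ! j < \<pi> ! i \<and> \<pi> ! i < \<pi> ! k"
    proof
      assume "\<exists>i j k. i < j \<and> j < k \<and> k < length \<pi> \<and> \<pi> ! j < \<pi> ! i \<and> \<pi> ! i < \<pi> ! k"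
      then obtain i j k where "i < j \<and> j < k \<and> k < length \<pi> \<and> \<pi> ! j < \<pi> ! i \<and> \<pi> ! i < \<pi> ! k" by blast
      then show ?thesis by (intro exI[of _ i] exI[of _ j] exI[of _ k]) auto
    next
      assume "\<exists>i j k. i < j \<and> j < k \<and> k < length \<pi> \<and> \<pi> ! k < \<pi> ! i \<and> \<pi> ! i < \<pi> ! j"
      then obtain i j k where "i < j \<and> j < k \<and> k < length \<pi> \<and> \<pi> ! k < \<pi> ! i \<and> \<pi> ! i < \<pi> ! j" by blast
      then show ?thesis by (intro exI[of _ i] exI[of _ k] exI[of _ j]) auto
    qed
  next
    assume "\<exists>i j k. i < j \<and> i < k \<and> j < length \<pi> \<and> k < length \<pi> \<and> \<pi> ! j < \<pi> ! i \<and> \<pi> ! i < \<pi> ! k"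
    then obtain i j k where H: "i < j" "i < k" "j < length \<pi>" "k < length \<pi>" "\<pi> ! j < \<pi> ! i" "\<pi> ! i < \<pi> ! k" by blast
    show "(\<exists>i j k. i < j \<and> j < k \<and> k < length \<pi> \<and> \<pi> ! j < \<pi> ! i \<and> \<pi> ! i < \<pi> ! k) \<or>
      (\<exists>i j k. i < j \<and> j < k \<and> k < length \<pi> \<and> \<pi> ! k < \<pi> ! i \<and> \<pi> ! i < \<pi> ! j)"
    proof (cases "j < k")
      case True
      then show ?thesis using H by blast
    next
      case False
      then have "k < j" using H by (metis linorder_neqE_nat less_asym)
      then show ?thesis using H by blast
    qed
  qed
  then show ?thesis unfolding avoids_def mm_RR by blast
qed


definition indep :: "nat set \<Rightarrow> bool" where
  "indep I = (\<forall>i\<in>I. \<forall>j\<in>I. i \<noteq> j \<longrightarrow> i + 2 \<le> j \<or> j + 2 \<le> i)"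

lemma mn_fin: "finite S \<Longrightarrow> finite {card I | I. I \<subseteq> S \<and> indep I}"
proof -
  assume "finite S"
  have "{card I | I. I \<subseteq> S \<and> indep I} \<subseteq> card ` Pow S" by auto
  then show ?thesis using \<open>finite S\<close> finite_subset by blast
qed

lemma mn_ge: "finite S \<Longrightarrow> I \<subseteq> S \<Longrightarrow> indep I \<Longrightarrow> card I \<le> max_nonadj S"
  unfolding max_nonadj_def indep_def[symmetric]
  by (rule Max_ge[OF mn_fin]) auto

lemma mn_ex: "finite S \<Longrightarrow> \<exists>I. I \<subseteq> S \<and> indep I \<and> card I = max_nonadj S"
proof -
  assume f: "finite S"
  have "{} \<subseteq> S \<and> indep {}" by (simp add: indep_def)
  then have ne: "{card I | I. I \<subseteq> S \<and> indep I} \<noteq> {}" by blast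
  have "max_nonadj S \<in> {card I | I. I \<subseteq> S \<and> indep I}"
    unfolding max_nonadj_def indep_def[symmetric]
    by (rule Max_in[OF mn_fin[OF f] ne])
  then show ?thesis by auto
qed

lemma mn_empty: "max_nonadj {} = 0"
  using mn_ex[of "{}"] by auto

lemma mn_R1:
  assumes f: "finite S" and n0: "0 \<notin> S"
  shows "max_nonadj S = max_nonadj {i. Suc i \<in> S}"
proof -
  have f': "finite {i. Suc i \<in> S}"
    using finite_vimageI[OF f, of Suc] by (simp add: vimage_def)
  obtain I where I: "I \<subseteq> S" "indep I" "card I = max_nonadj S" using mn_ex[OF f] by blast
  let ?J = "{i. Suc i \<in> I}"
  have IJ: "I = Suc ` ?J"
  proof
    show "I \<subseteq> Suc ` ?J"
    proof
      fix x assume x: "x \<in> I"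
      have "x \<noteq> 0"
      proof
        assume "x = 0"
        then have "0 \<in> S" using x I(1) by blast
        then show False using n0 by simp
      qed
      then have "x = Suc (x - 1)" by simp
      then show "x \<in> Suc ` ?J" using x by (intro image_eqI[of x Suc "x - 1"]) auto
    qed
  qed auto
  have c: "card (Suc ` ?J) = card ?J" by (rule card_image) simp
  have "card I = card ?J" using arg_cong[OF IJ, of card] c by (rule trans)
  moreover have "?J \<subseteq> {i. Suc i \<in> S}" using I(1) by auto
  moreover have "indep ?J" using I(2) unfolding indep_def by fastforce
  ultimately have le1: "max_nonadj S \<le> max_nonadj {i. Suc i \<in> S}"
    using mn_ge[OF f'] I(3) by metis
  obtain K where K: "K \<subseteq> {i. Suc i \<in> S}" "indep K" "card K = max_nonadj {i. Suc i \<in> S}"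
    using mn_ex[OF f'] by blast
  have "Suc ` K \<subseteq> S" using K(1) by auto
  moreover have "indep (Suc ` K)" using K(2) unfolding indep_def by auto
  moreover have "card (Suc ` K) = card K" by (simp add: card_image)
  ultimately have "max_nonadj {i. Suc i \<in> S} \<le> max_nonadj S"
    using mn_ge[OF f] K(3) by metis
  with le1 show ?thesis by simp
qed

lemma mn_R2:
  assumes f: "finite S" and n0: "0 \<in> S"
  shows "max_nonadj S = Suc (max_nonadj {i. Suc (Suc i) \<in> S})"
proof -
  have f': "finite {i. Suc (Suc i) \<in> S}"
    using finite_vimageI[OF f, of "\<lambda>i. Suc (Suc i)"] by (simp add: vimage_def inj_on_def)
  obtain I where I: "I \<subseteq> S" "indep I" "card I = max_nonadj S" using mn_ex[OF f] by blast
  let ?J = "{i. Suc (Suc i) \<in> I}"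
  have fI: "finite I" using I(1) f finite_subset by blast
  have sub: "I \<subseteq> (I \<inter> {0, 1}) \<union> (\<lambda>i. Suc (Suc i)) ` ?J"
  proof
    fix x assume "x \<in> I"
    then show "x \<in> (I \<inter> {0, 1}) \<union> (\<lambda>i. Suc (Suc i)) ` ?J"
    proof (cases "x \<le> 1")
      case True then show ?thesis using \<open>x \<in> I\<close> by auto
    next
      case False
      then have "x = Suc (Suc (x - 2))" by arith
      then obtain i where "x = Suc (Suc i)" by blast
      then show ?thesis using \<open>x \<in> I\<close> by auto
    qed
  qed
  have c01: "card (I \<inter> {0, 1}) \<le> 1"
  proof (cases "0 \<in> I \<and> 1 \<in> I")
    case True
    then have "0 + 2 \<le> (1::nat) \<or> 1 + 2 \<le> (0::nat)" using I(2) unfolding indep_def by blast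
    then have False by simp
    then show ?thesis ..
  next
    case False
    then have "I \<inter> {0,1} \<subseteq> {0} \<or> I \<inter> {0,1} \<subseteq> {1}" by auto
    then have "card (I \<inter> {0,1}) \<le> card {0::nat} \<or> card (I \<inter> {0,1}) \<le> card {1::nat}"
      by (meson card_mono finite.emptyI finite.insertI)
    then show ?thesis by simp
  qed
  have "card I \<le> card (I \<inter> {0, 1}) + card ((\<lambda>i. Suc (Suc i)) ` ?J)"
  proof -
    have "(\<lambda>i. Suc (Suc i)) ` ?J \<subseteq> I" by auto
    then have "finite ((\<lambda>i. Suc (Suc i)) ` ?J)" using fI finite_subset by blast
    then have "finite ((I \<inter> {0, 1}) \<union> (\<lambda>i. Suc (Suc i)) ` ?J)" by simp
    then show ?thesis by (rule order_trans[OF card_mono[OF _ sub] card_Un_le])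
  qed
  also have "card ((\<lambda>i. Suc (Suc i)) ` ?J) = card ?J" by (simp add: card_image inj_on_def)
  finally have cI: "card I \<le> Suc (card ?J)" using c01 by simp
  have "?J \<subseteq> {i. Suc (Suc i) \<in> S}" using I(1) by auto
  moreover have "indep ?J" using I(2) unfolding indep_def by fastforce
  ultimately have "card ?J \<le> max_nonadj {i. Suc (Suc i) \<in> S}" using mn_ge[OF f'] by blast
  with cI I(3) have le1: "max_nonadj S \<le> Suc (max_nonadj {i. Suc (Suc i) \<in> S})" by simp
  obtain K where K: "K \<subseteq> {i. Suc (Suc i) \<in> S}" "indep K" "card K = max_nonadj {i. Suc (Suc i) \<in> S}"
    using mn_ex[OF f'] by blast
  let ?K = "insert 0 ((\<lambda>i. Suc (Suc i)) ` K)"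
  have "?K \<subseteq> S" using K(1) n0 by auto
  moreover have "indep ?K" using K(2) unfolding indep_def by auto
  moreover have "card ?K = Suc (card K)"
    using K(1) f' finite_subset by (subst card_insert_disjoint) (auto simp: card_image inj_on_def)
  ultimately have "Suc (max_nonadj {i. Suc (Suc i) \<in> S}) \<le> max_nonadj S"
    using mn_ge[OF f] K(3) by metis
  with le1 show ?thesis by simp
qed


lemma ascset_Nil: "ascset [] = {}" by (simp add: ascset_def)
lemma ascset_single: "ascset [a] = {}" by (simp add: ascset_def)
lemma ascset_shift: "{i. Suc i \<in> ascset (a#l)} = ascset l" by (auto simp: ascset_def)
lemma ascset_fin: "finite (ascset l)"
  by (rule finite_subset[of _ "{..<length l}"]) (auto simp: ascset_def)
lemma ascset_Cons2: "ascset (a#b#l) = (if a < b then {0} else {}) \<union> Suc ` ascset (b#l)"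
proof (rule set_eqI)
  fix x show "x \<in> ascset (a#b#l) \<longleftrightarrow> x \<in> (if a < b then {0} else {}) \<union> Suc ` ascset (b#l)"
    by (cases x) (auto simp: ascset_def)
qed
lemma asc_Cons2: "asc (a#b#l) = (if a < b then 1 else 0) + asc (b#l)"
proof -
  have c: "card (Suc ` ascset (b#l)) = asc (b#l)" unfolding asc_def by (rule card_image) simp
  show ?thesis
  proof (cases "a < b")
    case True
    then have "ascset (a#b#l) = insert 0 (Suc ` ascset (b#l))" by (simp add: ascset_Cons2)
    then show ?thesis using True c ascset_fin[of "b#l"] unfolding asc_def by simp
  next
    case False
    then show ?thesis using c unfolding asc_def by (simp add: ascset_Cons2)
  qed
qed
lemma asc_single: "asc [a] = 0" by (simp add: asc_def ascset_single)
lemma MNA_Nil: "MNA [] = 0" by (simp add: MNA_def ascset_Nil mn_empty)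
lemma MNA_single: "MNA [a] = 0" by (simp add: MNA_def ascset_single mn_empty)
lemma MNA_Cons2: "MNA (a#b#l) = (if a < b then Suc (MNA l) else MNA (b#l))"
proof (cases "a < b")
  case True
  then have "0 \<in> ascset (a#b#l)" by (simp add: ascset_Cons2)
  then have "MNA (a#b#l) = Suc (max_nonadj {i. Suc (Suc i) \<in> ascset (a#b#l)})"
    unfolding MNA_def by (rule mn_R2[OF ascset_fin])
  also have "{i. Suc (Suc i) \<in> ascset (a#b#l)} = {i. Suc i \<in> {j. Suc j \<in> ascset (a#b#l)}}" by simp
  also have "\<dots> = ascset l" by (simp only: ascset_shift)
  finally show ?thesis using True by (simp add: MNA_def)
next
  case False
  then have "0 \<notin> ascset (a#b#l)" by (simp add: ascset_Cons2)
  then have "MNA (a#b#l) = max_nonadj {i. Suc i \<in> ascset (a#b#l)}"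
    unfolding MNA_def by (rule mn_R1[OF ascset_fin])
  then show ?thesis using False by (simp only: ascset_shift MNA_def) simp
qed

lemma desset_Nil: "desset [] = {}" by (simp add: desset_def)
lemma desset_single: "desset [a] = {}" by (simp add: desset_def)
lemma desset_shift: "{i. Suc i \<in> desset (a#l)} = desset l" by (auto simp: desset_def)
lemma desset_fin: "finite (desset l)"
  by (rule finite_subset[of _ "{..<length l}"]) (auto simp: desset_def)
lemma desset_Cons2: "desset (a#b#l) = (if b < a then {0} else {}) \<union> Suc ` desset (b#l)"
proof (rule set_eqI)
  fix x show "x \<in> desset (a#b#l) \<longleftrightarrow> x \<in> (if b < a then {0} else {}) \<union> Suc ` desset (b#l)"
    by (cases x) (auto simp: desset_def)
qed
lemma des_Cons2: "des (a#b#l) = (if b < a then 1 else 0) + des (b#l)"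
proof -
  have c: "card (Suc ` desset (b#l)) = des (b#l)" unfolding des_def by (rule card_image) simp
  show ?thesis
  proof (cases "b < a")
    case True
    then have "desset (a#b#l) = insert 0 (Suc ` desset (b#l))" by (simp add: desset_Cons2)
    then show ?thesis using True c desset_fin[of "b#l"] unfolding des_def by simp
  next
    case False
    then show ?thesis using c unfolding des_def by (simp add: desset_Cons2)
  qed
qed
lemma des_single: "des [a] = 0" by (simp add: des_def desset_single)
lemma MND_Nil: "MND [] = 0" by (simp add: MND_def desset_Nil mn_empty)
lemma MND_single: "MND [a] = 0" by (simp add: MND_def desset_single mn_empty)
lemma MND_Cons2: "MND (a#b#l) = (if b < a then Suc (MND l) else MND (b#l))"
proof (cases "b < a")
  case True
  then have "0 \<in> desset (a#b#l)" by (simp add: desset_Cons2)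
  then have "MND (a#b#l) = Suc (max_nonadj {i. Suc (Suc i) \<in> desset (a#b#l)})"
    unfolding MND_def by (rule mn_R2[OF desset_fin])
  also have "{i. Suc (Suc i) \<in> desset (a#b#l)} = {i. Suc i \<in> {j. Suc j \<in> desset (a#b#l)}}" by simp
  also have "\<dots> = desset l" by (simp only: desset_shift)
  finally show ?thesis using True by (simp add: MND_def)
next
  case False
  then have "0 \<notin> desset (a#b#l)" by (simp add: desset_Cons2)
  then have "MND (a#b#l) = max_nonadj {i. Suc i \<in> desset (a#b#l)}"
    unfolding MND_def by (rule mn_R1[OF desset_fin])
  then show ?thesis using False by (simp only: desset_shift MND_def) simp
qed

definition st :: "'a::field \<Rightarrow> 'a \<Rightarrow> 'a \<Rightarrow> 'a \<Rightarrow> nat list \<Rightarrow> 'a" where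
  "st p q y z \<pi> = p ^ asc \<pi> * q ^ des \<pi> * y ^ MNA \<pi> * z ^ MND \<pi>"

lemma st_Nil: "st p q y z [] = 1"
  by (simp add: st_def asc_def des_def ascset_Nil desset_Nil MNA_Nil MND_Nil)
lemma st_single: "st p q y z [a] = 1"
  by (simp add: st_def asc_single des_single MNA_single MND_single)

lemma st_TT: "a < b \<Longrightarrow> b < c \<Longrightarrow> st p q y z (a#b#c#r) = p^2 * y * st p q y z (c#r)"
  by (simp add: st_def asc_Cons2 des_Cons2 MNA_Cons2 MND_Cons2 power2_eq_square)
lemma st_T_Nil: "a < b \<Longrightarrow> st p q y z [a,b] = p * y"
  by (simp add: st_def asc_Cons2 des_Cons2 MNA_Cons2 MND_Cons2 asc_single des_single MNA_single MND_single MNA_Nil)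
lemma st_T_Cons: "a < b \<Longrightarrow> c < b \<Longrightarrow> st p q y z (a#b#c#r) = p * y * st p q y z (b#c#r)"
  by (simp add: st_def asc_Cons2 des_Cons2 MNA_Cons2 MND_Cons2)
lemma st_FF: "b < a \<Longrightarrow> c < b \<Longrightarrow> st p q y z (a#b#c#r) = q^2 * z * st p q y z (c#r)"
  by (simp add: st_def asc_Cons2 des_Cons2 MNA_Cons2 MND_Cons2 power2_eq_square)
lemma st_F_Nil: "b < a \<Longrightarrow> st p q y z [a,b] = q * z"
  by (simp add: st_def asc_Cons2 des_Cons2 MNA_Cons2 MND_Cons2 asc_single des_single MNA_single MND_single MND_Nil)
lemma st_F_Cons: "b < a \<Longrightarrow> b < c \<Longrightarrow> st p q y z (a#b#c#r) = q * z * st p q y z (b#c#r)"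
  by (simp add: st_def asc_Cons2 des_Cons2 MNA_Cons2 MND_Cons2)


definition Q :: "nat \<Rightarrow> nat \<Rightarrow> nat list set" where
  "Q lo hi = {\<pi>. set \<pi> = {lo..hi} \<and> distinct \<pi> \<and> mm \<pi>}"

lemma Av2_Q: "Av2 n [2,1,3] [2,3,1] = Q 1 n"
proof -
  have "Av2 n [2,1,3] [2,3,1] = {\<pi> \<in> permutations_of_set {1..n}. mm \<pi>}"
    unfolding Av2_def by (simp only: avoids_mm)
  also have "\<dots> = Q 1 n" unfolding Q_def permutations_of_set_def by auto
  finally show ?thesis .
qed

lemma Q_fin: "finite (Q lo hi)"
proof -
  have "Q lo hi \<subseteq> permutations_of_set {lo..hi}" by (auto simp: Q_def permutations_of_set_def)
  then show ?thesis by (rule finite_subset[OF _ finite_permutations_of_set])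
qed

lemma Q_single: "Q lo lo = {[lo]}"
proof
  show "Q lo lo \<subseteq> {[lo]}"
  proof
    fix \<pi> assume "\<pi> \<in> Q lo lo"
    then have s: "set \<pi> = {lo}" and d: "distinct \<pi>" by (auto simp: Q_def)
    then have "length \<pi> = 1" using distinct_card by fastforce
    then obtain x where "\<pi> = [x]" by (metis length_0_conv length_Suc_conv One_nat_def)
    then show "\<pi> \<in> {[lo]}" using s by simp
  qed
qed (simp add: Q_def)

lemma Q_empty: "Q 1 0 = {[]}"
  by (auto simp: Q_def)

lemma Q_elem: "\<tau> \<in> Q a b \<Longrightarrow> a \<le> b \<Longrightarrow> \<exists>c r. \<tau> = c # r \<and> a \<le> c \<and> c \<le> b"
proof -
  assume t: "\<tau> \<in> Q a b" and ab: "a \<le> b"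
  then have s: "set \<tau> = {a..b}" by (simp add: Q_def)
  then have "\<tau> \<noteq> []" using ab by auto
  then obtain c r where "\<tau> = c # r" by (cases \<tau>) auto
  moreover have "c \<in> {a..b}" using s \<open>\<tau> = c # r\<close> by auto
  ultimately show ?thesis by auto
qed

lemma Q_split:
  assumes "lo < hi"
  shows "Q lo hi = Cons lo ` Q (Suc lo) hi \<union> Cons hi ` Q lo (hi - 1)"
proof
  have le: "lo \<le> hi" using assms by simp
  obtain h where h: "hi = Suc h" using assms by (cases hi) auto
  have e1: "{lo..hi} - {lo} = {Suc lo..hi}" by auto
  have e2: "{lo..hi} - {hi} = {lo..hi - 1}" using h by auto
  have e3: "insert lo {Suc lo..hi} = {lo..hi}" using le by auto
  have e4: "insert hi {lo..hi - 1} = {lo..hi}" using h le by auto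
  show "Q lo hi \<subseteq> Cons lo ` Q (Suc lo) hi \<union> Cons hi ` Q lo (hi - 1)"
  proof
    fix \<pi> assume pQ: "\<pi> \<in> Q lo hi"
    obtain a l where p: "\<pi> = a # l" using Q_elem[OF pQ le] by blast
    have s: "insert a (set l) = {lo..hi}" and na: "a \<notin> set l" and dl: "distinct l" and ml: "mm l"
      and mma: "(\<forall>x\<in>set l. a \<le> x) \<or> (\<forall>x\<in>set l. x \<le> a)"
      using pQ unfolding p Q_def by simp_all
    have sl: "set l = {lo..hi} - {a}" using s na by blast
    have aI: "lo \<le> a" "a \<le> hi" using s by (metis atLeastAtMost_iff insertI1)+
    from mma show "\<pi> \<in> Cons lo ` Q (Suc lo) hi \<union> Cons hi ` Q lo (hi - 1)"
    proof
      assume H: "\<forall>x\<in>set l. a \<le> x"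
      have "lo \<in> insert a (set l)" using s le by simp
      then have "a \<le> lo" using H by blast
      then have "a = lo" using aI by simp
      then have "set l = {Suc lo..hi}" using sl e1 by simp
      then have "l \<in> Q (Suc lo) hi" using dl ml by (simp add: Q_def)
      then show ?thesis using p \<open>a = lo\<close> by blast
    next
      assume H: "\<forall>x\<in>set l. x \<le> a"
      have "hi \<in> insert a (set l)" using s le by simp
      then have "hi \<le> a" using H by blast
      then have "a = hi" using aI by simp
      then have "set l = {lo..hi - 1}" using sl e2 by simp
      then have "l \<in> Q lo (hi - 1)" using dl ml by (simp add: Q_def)
      then show ?thesis using p \<open>a = hi\<close> by blast
    qed
  qed
  show "Cons lo ` Q (Suc lo) hi \<union> Cons hi ` Q lo (hi - 1) \<subseteq> Q lo hi"
  proof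
    fix \<pi> assume "\<pi> \<in> Cons lo ` Q (Suc lo) hi \<union> Cons hi ` Q lo (hi - 1)"
    then show "\<pi> \<in> Q lo hi"
    proof
      assume "\<pi> \<in> Cons lo ` Q (Suc lo) hi"
      then obtain l where p: "\<pi> = lo # l" and l: "l \<in> Q (Suc lo) hi" by blast
      have s: "set l = {Suc lo..hi}" "distinct l" "mm l" using l by (simp_all add: Q_def)
      have "lo \<notin> set l" using s(1) by simp
      moreover have "\<forall>x\<in>set l. lo \<le> x" using s(1) by simp
      ultimately show ?thesis using s e3 unfolding p Q_def by simp
    next
      assume "\<pi> \<in> Cons hi ` Q lo (hi - 1)"
      then obtain l where p: "\<pi> = hi # l" and l: "l \<in> Q lo (hi - 1)" by blast
      have s: "set l = {lo..hi - 1}" "distinct l" "mm l" using l by (simp_all add: Q_def)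
      have "hi \<notin> set l" using s(1) h by simp
      moreover have "\<forall>x\<in>set l. x \<le> hi" using s(1) by auto
      ultimately show ?thesis using s e4 unfolding p Q_def by simp
    qed
  qed
qed

lemma sum_split:
  assumes "lo < hi"
  shows "(\<Sum>\<pi>\<in>Q lo hi. f \<pi>) = (\<Sum>\<sigma>\<in>Q (Suc lo) hi. f (lo # \<sigma>)) + (\<Sum>\<sigma>\<in>Q lo (hi - 1). f (hi # \<sigma>))"
proof -
  have ne: "lo \<noteq> hi" using assms by simp
  have d: "Cons lo ` Q (Suc lo) hi \<inter> Cons hi ` Q lo (hi - 1) = {}" using ne by blast
  have "(\<Sum>\<pi>\<in>Q lo hi. f \<pi>) = (\<Sum>\<pi>\<in>Cons lo ` Q (Suc lo) hi. f \<pi>) + (\<Sum>\<pi>\<in>Cons hi ` Q lo (hi - 1). f \<pi>)"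
    unfolding Q_split[OF assms] by (rule sum.union_disjoint[OF _ _ d]) (simp_all add: Q_fin)
  also have "\<dots> = (\<Sum>\<sigma>\<in>Q (Suc lo) hi. f (lo # \<sigma>)) + (\<Sum>\<sigma>\<in>Q lo (hi - 1). f (hi # \<sigma>))"
    by (simp add: sum.reindex)
  finally show ?thesis .
qed

definition AA where "AA p q y z lo hi = (\<Sum>\<pi>\<in>Q lo hi. st p q y z \<pi>)"
definition BB where "BB p q y z lo hi = (\<Sum>\<sigma>\<in>Q (Suc lo) hi. st p q y z (lo # \<sigma>))"
definition CC where "CC p q y z lo hi = (\<Sum>\<sigma>\<in>Q lo (hi - 1). st p q y z (hi # \<sigma>))"

lemma AA_split: "lo < hi \<Longrightarrow> AA p q y z lo hi = BB p q y z lo hi + CC p q y z lo hi"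
  unfolding AA_def BB_def CC_def by (rule sum_split)

lemma AA_base: "AA p q y z lo lo = 1"
  by (simp add: AA_def Q_single st_single)
lemma BB_base: "BB p q y z lo (Suc lo) = p * y"
  by (simp add: BB_def Q_single st_T_Nil)
lemma CC_base: "CC p q y z lo (Suc lo) = q * z"
  by (simp add: CC_def Q_single st_F_Nil)

lemma BB_rec:
  assumes "Suc lo < hi"
  shows "BB p q y z lo hi = p^2 * y * AA p q y z (Suc (Suc lo)) hi + p * y * CC p q y z (Suc lo) hi"
proof -
  have "BB p q y z lo hi = (\<Sum>\<tau>\<in>Q (Suc (Suc lo)) hi. st p q y z (lo # Suc lo # \<tau>))
      + (\<Sum>\<tau>\<in>Q (Suc lo) (hi - 1). st p q y z (lo # hi # \<tau>))"
    unfolding BB_def by (rule sum_split[OF assms])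
  also have "(\<Sum>\<tau>\<in>Q (Suc (Suc lo)) hi. st p q y z (lo # Suc lo # \<tau>))
      = (\<Sum>\<tau>\<in>Q (Suc (Suc lo)) hi. p^2 * y * st p q y z \<tau>)"
  proof (rule sum.cong[OF refl])
    fix \<tau> assume "\<tau> \<in> Q (Suc (Suc lo)) hi"
    then obtain c r where "\<tau> = c # r" "Suc (Suc lo) \<le> c" using Q_elem assms by fastforce
    then show "st p q y z (lo # Suc lo # \<tau>) = p^2 * y * st p q y z \<tau>" by (simp add: st_TT)
  qed
  also have "(\<Sum>\<tau>\<in>Q (Suc lo) (hi - 1). st p q y z (lo # hi # \<tau>))
      = (\<Sum>\<tau>\<in>Q (Suc lo) (hi - 1). p * y * st p q y z (hi # \<tau>))"
  proof (rule sum.cong[OF refl])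
    fix \<tau> assume "\<tau> \<in> Q (Suc lo) (hi - 1)"
    then obtain c r where "\<tau> = c # r" "c \<le> hi - 1" using Q_elem assms by fastforce
    then show "st p q y z (lo # hi # \<tau>) = p * y * st p q y z (hi # \<tau>)"
      using assms by (simp add: st_T_Cons)
  qed
  finally show ?thesis by (simp add: AA_def CC_def sum_distrib_left)
qed

lemma CC_rec:
  assumes "Suc lo < hi"
  shows "CC p q y z lo hi = q * z * BB p q y z lo (hi - 1) + q^2 * z * AA p q y z lo (hi - 2)"
proof -
  have lt: "lo < hi - 1" using assms by simp
  have "CC p q y z lo hi = (\<Sum>\<tau>\<in>Q (Suc lo) (hi - 1). st p q y z (hi # lo # \<tau>))
      + (\<Sum>\<tau>\<in>Q lo (hi - 1 - 1). st p q y z (hi # (hi - 1) # \<tau>))"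
    unfolding CC_def by (rule sum_split[OF lt])
  also have "(\<Sum>\<tau>\<in>Q (Suc lo) (hi - 1). st p q y z (hi # lo # \<tau>))
      = (\<Sum>\<tau>\<in>Q (Suc lo) (hi - 1). q * z * st p q y z (lo # \<tau>))"
  proof (rule sum.cong[OF refl])
    fix \<tau> assume "\<tau> \<in> Q (Suc lo) (hi - 1)"
    then obtain c r where "\<tau> = c # r" "Suc lo \<le> c" using Q_elem assms by fastforce
    then show "st p q y z (hi # lo # \<tau>) = q * z * st p q y z (lo # \<tau>)"
      using assms by (simp add: st_F_Cons)
  qed
  also have "(\<Sum>\<tau>\<in>Q lo (hi - 1 - 1). st p q y z (hi # (hi - 1) # \<tau>))
      = (\<Sum>\<tau>\<in>Q lo (hi - 1 - 1). q^2 * z * st p q y z \<tau>)"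
  proof (rule sum.cong[OF refl])
    fix \<tau> assume "\<tau> \<in> Q lo (hi - 1 - 1)"
    then obtain c r where "\<tau> = c # r" "c \<le> hi - 1 - 1" using Q_elem assms by fastforce
    then show "st p q y z (hi # (hi - 1) # \<tau>) = q^2 * z * st p q y z \<tau>"
      using assms by (simp add: st_FF)
  qed
  finally show ?thesis by (simp add: AA_def BB_def sum_distrib_left numeral_2_eq_2)
qed

fun sq :: "'a::field \<Rightarrow> 'a \<Rightarrow> 'a \<Rightarrow> 'a \<Rightarrow> nat \<Rightarrow> 'a \<times> 'a \<times> 'a" where
  "sq p q y z 0 = (1, 0, 0)"
| "sq p q y z (Suc 0) = (p * y + q * z, p * y, q * z)"
| "sq p q y z (Suc (Suc m)) =
     (let bb = p^2 * y * fst (sq p q y z m) + p * y * snd (snd (sq p q y z (Suc m)));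
          cc = q^2 * z * fst (sq p q y z m) + q * z * fst (snd (sq p q y z (Suc m)))
      in (bb + cc, bb, cc))"

lemma main_ind:
  "\<forall>lo. AA p q y z lo (lo + m) = fst (sq p q y z m) \<and>
     (0 < m \<longrightarrow> BB p q y z lo (lo + m) = fst (snd (sq p q y z m)) \<and>
                CC p q y z lo (lo + m) = snd (snd (sq p q y z m)))"
proof (induction p q y z m rule: sq.induct)
  case (1 p q y z)
  then show ?case by (simp add: AA_base)
next
  case (2 p q y z)
  then show ?case by (simp add: AA_split BB_base CC_base)
next
  case (3 p q y z m)
  show ?case
  proof
    fix lo
    have b: "BB p q y z lo (lo + Suc (Suc m)) = p^2 * y * fst (sq p q y z m) + p * y * snd (snd (sq p q y z (Suc m)))"
    proof -
      have "BB p q y z lo (lo + Suc (Suc m)) = p^2 * y * AA p q y z (Suc (Suc lo)) (Suc (Suc lo) + m)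
              + p * y * CC p q y z (Suc lo) (Suc lo + Suc m)"
        using BB_rec[of lo "lo + Suc (Suc m)"] by simp
      then show ?thesis using "3.IH"(1)[rule_format, of "Suc (Suc lo)"] "3.IH"(2)[rule_format, of "Suc lo"] by simp
    qed
    have c: "CC p q y z lo (lo + Suc (Suc m)) = q^2 * z * fst (sq p q y z m) + q * z * fst (snd (sq p q y z (Suc m)))"
    proof -
      have "CC p q y z lo (lo + Suc (Suc m)) = q * z * BB p q y z lo (lo + Suc m)
              + q^2 * z * AA p q y z lo (lo + m)"
        using CC_rec[of lo "lo + Suc (Suc m)"] by simp
      then show ?thesis using "3.IH"(1)[rule_format, of "lo"] "3.IH"(2)[rule_format, of "lo"] by simp
    qed
    have a: "AA p q y z lo (lo + Suc (Suc m)) = BB p q y z lo (lo + Suc (Suc m)) + CC p q y z lo (lo + Suc (Suc m))"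
      by (rule AA_split) simp
    show "AA p q y z lo (lo + Suc (Suc m)) = fst (sq p q y z (Suc (Suc m))) \<and>
         (0 < Suc (Suc m) \<longrightarrow>
          BB p q y z lo (lo + Suc (Suc m)) = fst (snd (sq p q y z (Suc (Suc m)))) \<and>
          CC p q y z lo (lo + Suc (Suc m)) = snd (snd (sq p q y z (Suc (Suc m)))))"
      using a b c by (simp add: Let_def)
  qed
qed


lemma fst_sq_Suc: "fst (sq p q y z (Suc m)) = fst (snd (sq p q y z (Suc m))) + snd (snd (sq p q y z (Suc m)))"
  by (cases m) (simp_all add: Let_def)

lemma sq_rec:
  "fst (sq p q y z (Suc (Suc (Suc k)))) =
     (p^2*y + q^2*z + p*q*y*z) * fst (sq p q y z (Suc k)) + (p^2*q*y*z + p*q^2*y*z) * fst (sq p q y z k)"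
proof -
  define a0 where "a0 = fst (sq p q y z k)"
  define b1 where "b1 = fst (snd (sq p q y z (Suc k)))"
  define c1 where "c1 = snd (snd (sq p q y z (Suc k)))"
  have a1: "fst (sq p q y z (Suc k)) = b1 + c1" unfolding b1_def c1_def by (rule fst_sq_Suc)
  have b2: "fst (snd (sq p q y z (Suc (Suc k)))) = p^2*y*a0 + p*y*c1" by (simp add: Let_def a0_def c1_def)
  have c2: "snd (snd (sq p q y z (Suc (Suc k)))) = q^2*z*a0 + q*z*b1" by (simp add: Let_def a0_def b1_def)
  have "fst (sq p q y z (Suc (Suc (Suc k)))) =
      p^2*y*fst (sq p q y z (Suc k)) + p*y*snd (snd (sq p q y z (Suc (Suc k))))
      + (q^2*z*fst (sq p q y z (Suc k)) + q*z*fst (snd (sq p q y z (Suc (Suc k)))))"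
    by (simp add: Let_def)
  also have "\<dots> = (p^2*y + q^2*z + p*q*y*z) * (b1 + c1) + (p^2*q*y*z + p*q^2*y*z) * a0"
    unfolding a1 b2 c2 by (simp add: algebra_simps power2_eq_square)
  finally show ?thesis using a1 a0_def by simp
qed

lemma coeff_formula:
  "(\<Sum>\<pi>\<in>Av2 n [2,1,3] [2,3,1]. p ^ asc \<pi> * q ^ des \<pi> * y ^ MNA \<pi> * z ^ MND \<pi>)
     = (if n = 0 then 1 else fst (sq p q y z (n - 1)))"
proof -
  have "(\<Sum>\<pi>\<in>Av2 n [2,1,3] [2,3,1]. p ^ asc \<pi> * q ^ des \<pi> * y ^ MNA \<pi> * z ^ MND \<pi>) = AA p q y z 1 n"
    unfolding Av2_Q AA_def st_def ..
  also have "\<dots> = (if n = 0 then 1 else fst (sq p q y z (n - 1)))"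
  proof (cases n)
    case 0
    show ?thesis unfolding 0 AA_def Q_empty by (simp add: st_Nil)
  next
    case (Suc m)
    have "AA p q y z 1 (1 + m) = fst (sq p q y z m)" using main_ind[of p q y z m] by blast
    then show ?thesis using Suc by simp
  qed
  finally show ?thesis .
qed

lemma mult_cX_nth: "fps_nth ((G::'a::field fps) * (fps_const c * fps_X ^ k)) n = c * (if n < k then 0 else fps_nth G (n - k))"
proof -
  have eq: "G * (fps_const c * fps_X ^ k) = fps_const c * (G * fps_X ^ k)" by (rule mult.left_commute)
  show ?thesis unfolding eq fps_mult_left_const_nth fps_X_power_mult_right_nth by simp
qed


theorem theorem8:
  fixes p q y z :: "'a :: field"
  shows "Abs_fps (\<lambda>n. \<Sum>\<pi>\<in>Av2 n [2,1,3] [2,3,1].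
            p ^ asc \<pi> * q ^ des \<pi> * y ^ MNA \<pi> * z ^ MND \<pi>)
       = (1 + fps_X + fps_const (p * y) * fps_X ^ 2 - fps_const (p^2 * y) * fps_X ^ 2
            + fps_const (q * z) * fps_X ^ 2 - fps_const (q^2 * z) * fps_X ^ 2
            - fps_const (p * q * y * z) * fps_X ^ 2 + fps_const (p * q * y * z) * fps_X ^ 3
            - fps_const (p^2 * q * y * z) * fps_X ^ 3 - fps_const (p * q^2 * y * z) * fps_X ^ 3)
         / (1 - fps_const (p^2 * y) * fps_X ^ 2 - fps_const (q^2 * z) * fps_X ^ 2
            - fps_const (p * q * y * z) * fps_X ^ 2 - fps_const (p^2 * q * y * z) * fps_X ^ 3
            - fps_const (p * q^2 * y * z) * fps_X ^ 3)"
  (is "?G = ?N / ?D")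
proof -
  have Gn: "fps_nth ?G n = (if n = 0 then 1 else fst (sq p q y z (n - 1)))" for n
    unfolding fps_nth_Abs_fps by (rule coeff_formula)
  have GD: "?G * ?D = ?N"
  proof (rule fps_ext)
    fix n
    have e: "fps_nth (?G * ?D) n = fps_nth ?G n
        - p^2 * y * (if n < 2 then 0 else fps_nth ?G (n - 2))
        - q^2 * z * (if n < 2 then 0 else fps_nth ?G (n - 2))
        - p * q * y * z * (if n < 2 then 0 else fps_nth ?G (n - 2))
        - p^2 * q * y * z * (if n < 3 then 0 else fps_nth ?G (n - 3))
        - p * q^2 * y * z * (if n < 3 then 0 else fps_nth ?G (n - 3))"
      by (simp only: right_diff_distrib mult_1_right fps_sub_nth mult_cX_nth)
    show "fps_nth (?G * ?D) n = fps_nth ?N n"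
    proof (cases n)
      case 0
      then show ?thesis unfolding e Gn by simp
    next
      case (Suc n1)
      note n1 = Suc
      show ?thesis
      proof (cases n1)
        case 0
        then show ?thesis unfolding e Gn using n1 by simp
      next
        case (Suc n2)
        note n2 = Suc
        show ?thesis
        proof (cases n2)
          case 0
          then show ?thesis unfolding e Gn using n1 n2 by (simp add: algebra_simps)
        next
          case (Suc n3)
          note n3 = Suc
          show ?thesis
          proof (cases n3)
            case 0
            then show ?thesis unfolding e Gn using n1 n2 n3
              by (simp add: Let_def algebra_simps power2_eq_square)
          next
            case (Suc k)
            have "fps_nth ?N n = 0" using n1 n2 n3 Suc by simp
            moreover have "fps_nth (?G * ?D) n = 0"
              unfolding e Gn using n1 n2 n3 Suc sq_rec[of p q y z k] by (simp add: algebra_simps)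
            ultimately show ?thesis by simp
          qed
        qed
      qed
    qed
  qed
  have D0: "?D \<noteq> 0"
  proof
    assume "?D = 0"
    then have "fps_nth ?D 0 = 0" by simp
    then show False by simp
  qed
  have "?N / ?D = ?G * ?D / ?D" using GD by simp
  also have "\<dots> = ?G" using D0 by (rule nonzero_mult_div_cancel_right)
  finally show ?thesis by simp
qed

end
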